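(* Let $U$ be an undirected graph with $n$ vertices, diameter $d$ and maximum degree $\Delta$ satisfying $\Delta^d-1<n(\Delta-1)$. Then for any vertex $v$ and any subset $A$ of vertices with $|A|\le\Delta$, there exists a vertex $u\neq v$ with $\operatorname{dist}(u,A)>d-2$.
   Context: $\operatorname{dist}$ denotes graph distance in $U$, and for a vertex $u$ and vertex set $A$, $\operatorname{dist}(u,A)=\min\{\operatorname{dist}(u,a):a\in A\}$. *)

theory Defs
  imports Main
begin

definition simple_graph :: "'a set \<Rightarrow> ('a \<Rightarrow> 'a \<Rightarrow> bool) \<Rightarrow> bool" where
  "simple_graph V E \<longleftrightarrow> finite V \<and> V \<noteq> {} \<and>
     (\<forall>u v. E u v \<longrightarrow> u \<in> V \<and> v \<in> V) \<and>
     (\<forall>u v. E u v \<longrightarrow> E v u) \<and> (\<forall>u. \<not> E u u)"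

definition is_walk :: "('a \<Rightarrow> 'a \<Rightarrow> bool) \<Rightarrow> 'a list \<Rightarrow> bool" where
  "is_walk E xs \<longleftrightarrow> xs \<noteq> [] \<and> (\<forall>i. Suc i < length xs \<longrightarrow> E (xs ! i) (xs ! Suc i))"

definition walk_of_len :: "('a \<Rightarrow> 'a \<Rightarrow> bool) \<Rightarrow> 'a \<Rightarrow> 'a \<Rightarrow> nat \<Rightarrow> bool" where
  "walk_of_len E u v k \<longleftrightarrow>
     (\<exists>xs. is_walk E xs \<and> hd xs = u \<and> last xs = v \<and> length xs = Suc k)"

definition connected_graph :: "'a set \<Rightarrow> ('a \<Rightarrow> 'a \<Rightarrow> bool) \<Rightarrow> bool" where
  "connected_graph V E \<longleftrightarrow> (\<forall>u\<in>V. \<forall>v\<in>V. \<exists>k. walk_of_len E u v k)"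

text \<open>Graph distance (meaningful for connected graphs).\<close>
definition gdist :: "('a \<Rightarrow> 'a \<Rightarrow> bool) \<Rightarrow> 'a \<Rightarrow> 'a \<Rightarrow> nat" where
  "gdist E u v = (LEAST k. walk_of_len E u v k)"

definition diameter :: "'a set \<Rightarrow> ('a \<Rightarrow> 'a \<Rightarrow> bool) \<Rightarrow> nat" where
  "diameter V E = Max {gdist E u v | u v. u \<in> V \<and> v \<in> V}"

definition degree :: "'a set \<Rightarrow> ('a \<Rightarrow> 'a \<Rightarrow> bool) \<Rightarrow> 'a \<Rightarrow> nat" where
  "degree V E v = card {w \<in> V. E v w}"

definition max_degree :: "'a set \<Rightarrow> ('a \<Rightarrow> 'a \<Rightarrow> bool) \<Rightarrow> nat" where
  "max_degree V E = Max (degree V E ` V)"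

end

theory Submission
  imports Defs
begin

lemma walk0: "walk_of_len E u a 0 \<Longrightarrow> u = a"
  unfolding walk_of_len_def
  by (metis One_nat_def hd_conv_nth last_conv_nth length_0_conv diff_Suc_1 nat.distinct(1))

lemma walkSuc:
  assumes "walk_of_len E u a (Suc j)"
  shows "\<exists>x. walk_of_len E u x j \<and> E x a"
proof -
  obtain xs where w: "is_walk E xs" "hd xs = u" "last xs = a" "length xs = Suc (Suc j)"
    using assms unfolding walk_of_len_def by blast
  let ?ys = "butlast xs"
  have l: "length ?ys = Suc j" using w(4) by simp
  have ne: "?ys \<noteq> []" using l by (metis length_0_conv nat.distinct(1))
  have "is_walk E ?ys" using w(1) l ne unfolding is_walk_def
    by (auto simp: nth_butlast)
  moreover have "hd ?ys = u" using w(2) ne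
    by (metis hd_append2 append_butlast_last_id w(4) list.size(3) nat.distinct(1))
  moreover have "last ?ys = xs ! j" using l ne
    by (simp add: last_conv_nth nth_butlast)
  moreover have "E (xs ! j) a"
    using w(1,3,4) unfolding is_walk_def
    by (metis lessI last_conv_nth list.size(3) nat.distinct(1) diff_Suc_1)
  ultimately show ?thesis unfolding walk_of_len_def using l by blast
qed

definition ball :: "'a set \<Rightarrow> ('a \<Rightarrow> 'a \<Rightarrow> bool) \<Rightarrow> 'a \<Rightarrow> nat \<Rightarrow> 'a set" where
  "ball V E a k = {u\<in>V. \<exists>j\<le>k. walk_of_len E u a j}"

fun S :: "nat \<Rightarrow> nat \<Rightarrow> nat" where
  "S D 0 = 1" | "S D (Suc k) = 1 + D * S D k"

lemma S_eq: "(int D - 1) * int (S D k) = int D ^ Suc k - 1"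
  by (induction k) (auto simp: algebra_simps)

lemma ball_sub: "ball V E a (Suc k) \<subseteq> insert a (\<Union>x\<in>{x\<in>V. E a x}. ball V E x k)"
  if sym: "\<forall>u v. E u v \<longrightarrow> E v u" and inV: "\<forall>u v. E u v \<longrightarrow> u \<in> V \<and> v \<in> V"
proof
  fix u assume "u \<in> ball V E a (Suc k)"
  then obtain j where u: "u \<in> V" "j \<le> Suc k" "walk_of_len E u a j" unfolding ball_def by blast
  show "u \<in> insert a (\<Union>x\<in>{x\<in>V. E a x}. ball V E x k)"
  proof (cases j)
    case 0 then have "u = a" using u(3) by (intro walk0) simp
    then show ?thesis by simp
  next
    case (Suc i)
    have "walk_of_len E u a (Suc i)" using u(3) Suc by simp
    from walkSuc[OF this] obtain x where x: "walk_of_len E u x i" "E x a" by blast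
    have "E a x" using x(2) sym by simp
    moreover have "x \<in> V" using x(2) inV by simp
    ultimately have "x \<in> {x\<in>V. E a x}" by simp
    moreover have "i \<le> k" using u(2) Suc by simp
    then have "u \<in> ball V E x k" unfolding ball_def using u(1) x(1) by blast
    ultimately show ?thesis by blast
  qed
qed

lemma ball_card:
  assumes sg: "simple_graph V E" and deg: "\<And>a. a \<in> V \<Longrightarrow> card {x\<in>V. E a x} \<le> D"
  shows "a \<in> V \<Longrightarrow> card (ball V E a k) \<le> S D k"
proof (induction k arbitrary: a)
  case 0
  have "ball V E a 0 \<subseteq> {a}" unfolding ball_def by (auto dest: walk0)
  then show ?case using card_mono[of "{a}"] by simp
next
  case (Suc k)
  have fin: "finite V" using sg unfolding simple_graph_def by blast
  have sym: "\<forall>u v. E u v \<longrightarrow> E v u" and inV: "\<forall>u v. E u v \<longrightarrow> u \<in> V \<and> v \<in> V"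
    using sg unfolding simple_graph_def by blast+
  let ?N = "{x\<in>V. E a x}"
  have finN: "finite ?N" using fin by simp
  have "card (ball V E a (Suc k)) \<le> card (insert a (\<Union>x\<in>?N. ball V E x k))"
    by (rule card_mono) (use fin ball_sub[OF sym inV] in \<open>auto simp: ball_def\<close>)
  also have "\<dots> \<le> Suc (card (\<Union>x\<in>?N. ball V E x k))" by (rule card_insert_le_m1) auto
  also have "card (\<Union>x\<in>?N. ball V E x k) \<le> (\<Sum>x\<in>?N. card (ball V E x k))"
    by (rule card_UN_le[OF finN])
  also have "\<dots> \<le> card ?N * S D k"
    using sum_bounded_above[of ?N "\<lambda>x. card (ball V E x k)" "S D k"] Suc.IH by auto
  also have "\<dots> \<le> D * S D k" using deg[OF Suc.prems] by simp
  finally show ?case by simp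
qed

theorem mainTheorem14:
  fixes V :: "'a set" and E :: "'a \<Rightarrow> 'a \<Rightarrow> bool" and n d \<Delta> :: nat
    and v :: 'a and A :: "'a set"
  assumes "simple_graph V E"
    and "connected_graph V E"
    and "n = card V"
    and "d = diameter V E"
    and "\<Delta> = max_degree V E"
    and "(int \<Delta>) ^ d - 1 < int n * (int \<Delta> - 1)"
    and "v \<in> V"
    and "A \<subseteq> V"
    and "card A \<le> \<Delta>"
  shows "\<exists>u\<in>V. u \<noteq> v \<and> (\<forall>a\<in>A. int (gdist E u a) > int d - 2)"
proof -
  have fin: "finite V" and ne: "V \<noteq> {}" using assms(1) unfolding simple_graph_def by blast+
  have n1: "n \<ge> 1" using fin ne assms(3) by (simp add: Suc_leI card_gt_0_iff)
  have deg: "\<And>a. a \<in> V \<Longrightarrow> card {x\<in>V. E a x} \<le> \<Delta>"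
    using assms(5) fin unfolding max_degree_def degree_def by (simp add: Max_ge)
  have D2: "\<Delta> \<ge> 2"
  proof (rule ccontr)
    assume "\<not> \<Delta> \<ge> 2"
    then have "\<Delta> = 0 \<or> \<Delta> = 1" by auto
    then show False
    proof
      assume "\<Delta> = 0" then show False using assms(6) n1 by (cases d) auto
    next
      assume "\<Delta> = 1" then show False using assms(6) by simp
    qed
  qed
  show ?thesis
  proof (cases "d \<ge> 2")
    case False
    obtain w where "w \<in> V" "\<Delta> = card {x\<in>V. E w x}"
      using assms(5) fin ne unfolding max_degree_def degree_def
      by (metis (no_types, lifting) Max_in finite_imageI image_iff image_is_empty)
    then have "card {x\<in>V. E w x} \<ge> 2" using D2 by simp
    then have "card V \<ge> 2" using card_mono[OF fin, of "{x\<in>V. E w x}"] by auto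
    then have "card (V - {v}) \<ge> 1" using assms(7) fin by simp
    then obtain u where "u \<in> V - {v}" by (metis card.empty ex_in_conv not_one_le_zero)
    then show ?thesis using False by auto
  next
    case True
    define B where "B = (\<Union>a\<in>A. ball V E a (d-2))"
    have finA: "finite A" using assms(8) fin finite_subset by blast
    have BV: "B \<subseteq> V" unfolding B_def ball_def by auto
    have "card B \<le> (\<Sum>a\<in>A. card (ball V E a (d-2)))" unfolding B_def by (rule card_UN_le[OF finA])
    also have "\<dots> \<le> card A * S \<Delta> (d-2)"
      using sum_bounded_above[of A "\<lambda>a. card (ball V E a (d-2))" "S \<Delta> (d-2)"]
        ball_card[OF assms(1) deg] assms(8) by auto
    also have "\<dots> \<le> \<Delta> * S \<Delta> (d-2)" using assms(9) by simp
    finally have cB: "int (card B) \<le> int \<Delta> * int (S \<Delta> (d-2))" by (metis of_nat_le_iff of_nat_mult)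
    have "(int \<Delta> - 1) * int (card B) \<le> int \<Delta> * ((int \<Delta> - 1) * int (S \<Delta> (d-2)))"
    proof -
      have "(int \<Delta> - 1) * int (card B) \<le> (int \<Delta> - 1) * (int \<Delta> * int (S \<Delta> (d-2)))"
        using cB D2 by (intro mult_left_mono) auto
      then show ?thesis by (simp add: algebra_simps)
    qed
    also have "\<dots> = int \<Delta> * (int \<Delta> ^ Suc (d-2) - 1)" by (simp add: S_eq)
    also have "\<dots> = int \<Delta> ^ d - int \<Delta>"
    proof -
      obtain m where "d = Suc (Suc m)" using True by (metis add_2_eq_Suc le_Suc_ex)
      then show ?thesis by (simp add: algebra_simps)
    qed
    finally have "(int \<Delta> - 1) * int (card B) + (int \<Delta> - 1) < int n * (int \<Delta> - 1)"
      using assms(6) by linarith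
    then have "(int \<Delta> - 1) * (int (card B) + 1) < (int \<Delta> - 1) * int n"
      by (simp add: algebra_simps)
    moreover have "0 < int \<Delta> - 1" using D2 by simp
    ultimately have "int (card B) + 1 < int n"
      using mult_less_cancel_left_pos by blast
    then have "card (V - B) \<ge> 2" using card_Diff_subset[OF finite_subset[OF BV fin] BV] assms(3)
      by linarith
    then have "card (V - B - {v}) \<ge> 1" using fin by (simp add: card_Diff_singleton_if)
      linarith
    then obtain u where "u \<in> V - B - {v}" by (metis card.empty ex_in_conv not_one_le_zero)
    then have u: "u \<in> V" "u \<notin> B" "u \<noteq> v" by auto
    have "\<forall>a\<in>A. int (gdist E u a) > int d - 2"
    proof
      fix a assume a: "a \<in> A"
      then have aV: "a \<in> V" using assms(8) by blast
      have ex: "\<exists>k. walk_of_len E u a k" using assms(2) u(1) aV unfolding connected_graph_def by blast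
      have w: "walk_of_len E u a (gdist E u a)" unfolding gdist_def using LeastI_ex[OF ex] .
      have "\<not> gdist E u a \<le> d - 2"
      proof
        assume "gdist E u a \<le> d - 2"
        then have "u \<in> ball V E a (d-2)" unfolding ball_def using u(1) w by blast
        then show False using u(2) a unfolding B_def by blast
      qed
      then show "int (gdist E u a) > int d - 2" using True by linarith
    qed
    then show ?thesis using u by blast
  qed
qed

end
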